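(* For every combinatorial auction with $d$-strong-SOS valuations ($d\ge1$) over single-dimensional signals $s_i\in\{0,1,\dots,k-1\}$ ($k\ge2$ a power of $2$), the mechanism that runs Random Bucket with probability $\frac{d\log_2k}{d\log_2k+2}$ and Random Sampling otherwise is universally ex-post IC-IR and gives a $\big(d(d+1)\log_2k+2(d+1)\big)$-approximation to the optimal social welfare.
   Context: Setting: $n$ agents, $m$ items; agent $i$ has private signal $s_i$; value for bundle $T$ is $v_{iT}(\mathbf{s})\ge0$, public, weakly increasing in each coordinate, strictly in $s_i$. $d$-strong-SOS: for every $j$, $\delta\ge0$, and profiles $\mathbf{s}'\le\mathbf{s}$ coordinate-wise, $d\big(v(\mathbf{s}'_{-j},s'_j+\delta)-v(\mathbf{s}'_{-j},s'_j)\big)\ge v(\mathbf{s}_{-j},s_j+\delta)-v(\mathbf{s}_{-j},s_j)$; every $v_{iT}$ is $d$-strong-SOS. Allocations assign disjoint bundles. Random Bucket: choose $\ell$ uniformly in $\{1,\dots,\log_2k\}$; $N_{B_\ell}=\{i:s_i\ge2^{\ell-1}\}$; for $i\in N_{B_\ell}$, $\bar v_{iT}=v_{iT}(\mathbf{s}_{N_{\neg B_\ell}},\mathbf{2^{\ell-1}}_{N_{B_\ell}})$, else $0$; allocate a $\bar v$-welfare-maximizing allocation among $N_{B_\ell}$; agent receiving $\bar T_i$ pays $v_{i\bar T_i}(\mathbf{s}_{-i},2^{\ell-1}-1)$. Random Sampling: split agents uniformly at random into $A,B$; for $i\in B$, $\tilde v_{iT}=v_{iT}(\mathbf{s}_A,\mathbf{0}_B)$,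 for $i\in A$, $0$; allocate a $\tilde v$-welfare-maximizing allocation among $B$; no payments. *)

theory Defs
  imports Complex_Main
begin

text \<open>Agents are the elements of a finite type 'a (n = CARD('a)), items the elements of
a finite type 'b (m = CARD('b)).  The valuation v i T s is agent i's value for
bundle T at signal profile s.\<close>

definition valid_profile :: "nat \<Rightarrow> ('a \<Rightarrow> nat) \<Rightarrow> bool" where
  "valid_profile k s \<longleftrightarrow> (\<forall>i. s i < k)"

definition strong_SOS :: "nat \<Rightarrow> real \<Rightarrow> (('a \<Rightarrow> nat) \<Rightarrow> real) \<Rightarrow> bool" where
  "strong_SOS k d f \<longleftrightarrow>
     (\<forall>j (\<delta>::nat) s s'. valid_profile k s \<and> valid_profile k s' \<and> (\<forall>i. s' i \<le> s i)
        \<and> s j + \<delta> < k \<longrightarrow>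
        d * (f (s'(j := s' j + \<delta>)) - f s') \<ge> f (s(j := s j + \<delta>)) - f s)"

definition valid_valuations ::
  "nat \<Rightarrow> real \<Rightarrow> ('a \<Rightarrow> 'b set \<Rightarrow> ('a \<Rightarrow> nat) \<Rightarrow> real) \<Rightarrow> bool" where
  "valid_valuations k d v \<longleftrightarrow>
     (\<forall>i T s. valid_profile k s \<longrightarrow> v i T s \<ge> 0)
   \<and> (\<forall>i s. v i {} s = 0)
   \<and> (\<forall>i T s j x y. valid_profile k s \<and> x \<le> y \<and> y < k \<longrightarrow>
         v i T (s(j := x)) \<le> v i T (s(j := y)))
   \<and> (\<forall>i T s x y. T \<noteq> {} \<and> valid_profile k s \<and> x < y \<and> y < k \<longrightarrow>
         v i T (s(i := x)) < v i T (s(i := y)))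
   \<and> (\<forall>i T. strong_SOS k d (v i T))"

text \<open>Allocations: disjoint bundles (not every item needs to be allocated).\<close>
definition feasible :: "('a \<Rightarrow> 'b set) \<Rightarrow> bool" where
  "feasible A \<longleftrightarrow> (\<forall>i j. i \<noteq> j \<longrightarrow> A i \<inter> A j = {})"

definition welfare :: "('a \<Rightarrow> 'b set \<Rightarrow> ('a \<Rightarrow> nat) \<Rightarrow> real) \<Rightarrow> ('a \<Rightarrow> nat)
    \<Rightarrow> ('a \<Rightarrow> 'b set) \<Rightarrow> real" where
  "welfare v s A = (\<Sum>i\<in>UNIV. v i (A i) s)"

definition opt_welfare :: "('a::finite \<Rightarrow> 'b::finite set \<Rightarrow> ('a \<Rightarrow> nat) \<Rightarrow> real)
    \<Rightarrow> ('a \<Rightarrow> nat) \<Rightarrow> real" where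
  "opt_welfare v s = Max (welfare v s ` {A. feasible A})"

definition is_welfare_max_rule ::
  "('a set \<Rightarrow> ('a \<Rightarrow> 'b set \<Rightarrow> real) \<Rightarrow> ('a \<Rightarrow> 'b set)) \<Rightarrow> bool" where
  "is_welfare_max_rule sel \<longleftrightarrow>
     (\<forall>N w. feasible (sel N w) \<and> (\<forall>i. i \<notin> N \<longrightarrow> sel N w i = {})
        \<and> (\<forall>A. feasible A \<and> (\<forall>i. i \<notin> N \<longrightarrow> A i = {}) \<longrightarrow>
              (\<Sum>i\<in>UNIV. w i (A i)) \<le> (\<Sum>i\<in>UNIV. w i (sel N w i))))"

type_synonym ('a, 'b) mech = "('a \<Rightarrow> nat) \<Rightarrow> ('a \<Rightarrow> 'b set) \<times> ('a \<Rightarrow> real)"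

definition random_bucket ::
  "('a set \<Rightarrow> ('a \<Rightarrow> 'b set \<Rightarrow> real) \<Rightarrow> ('a \<Rightarrow> 'b set))
   \<Rightarrow> ('a \<Rightarrow> 'b set \<Rightarrow> ('a \<Rightarrow> nat) \<Rightarrow> real) \<Rightarrow> nat \<Rightarrow> ('a, 'b) mech" where
  "random_bucket sel v l r =
     (let t = (2::nat) ^ (l - 1);
          NB = {i. r i \<ge> t};
          vbar = (\<lambda>i T. if i \<in> NB then v i T (\<lambda>j. if j \<in> NB then t else r j) else 0);
          A = sel NB vbar
      in (A, (\<lambda>i. if i \<in> NB then v i (A i) (r(i := t - 1)) else 0)))"

text \<open>Random Sampling with partition (As, -As): agents in -As form B.\<close>
definition random_sampling ::
  "('a set \<Rightarrow> ('a \<Rightarrow> 'b set \<Rightarrow> real) \<Rightarrow> ('a \<Rightarrow> 'b set))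
   \<Rightarrow> ('a \<Rightarrow> 'b set \<Rightarrow> ('a \<Rightarrow> nat) \<Rightarrow> real) \<Rightarrow> 'a set \<Rightarrow> ('a, 'b) mech" where
  "random_sampling sel v As r =
     (let vtil = (\<lambda>i T. if i \<notin> As then v i T (\<lambda>j. if j \<in> As then r j else 0) else 0)
      in (sel (- As) vtil, (\<lambda>i. 0)))"

text \<open>Ex-post IC and IR of a deterministic mechanism (true profile s, agent i
misreporting x while others report truthfully).\<close>
definition utility :: "('a \<Rightarrow> 'b set \<Rightarrow> ('a \<Rightarrow> nat) \<Rightarrow> real) \<Rightarrow> ('a, 'b) mech
    \<Rightarrow> ('a \<Rightarrow> nat) \<Rightarrow> 'a \<Rightarrow> ('a \<Rightarrow> nat) \<Rightarrow> real" where
  "utility v M s i r = v i (fst (M r) i) s - snd (M r) i"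

definition expost_IC_IR :: "nat \<Rightarrow> ('a \<Rightarrow> 'b set \<Rightarrow> ('a \<Rightarrow> nat) \<Rightarrow> real)
    \<Rightarrow> ('a, 'b) mech \<Rightarrow> bool" where
  "expost_IC_IR k v M \<longleftrightarrow>
     (\<forall>s i. valid_profile k s \<longrightarrow>
        utility v M s i s \<ge> 0 \<and>
        (\<forall>x<k. utility v M s i (s(i := x)) \<le> utility v M s i s))"

text \<open>Expected welfare of the combined mechanism (k = 2^r): Random Bucket with
probability p (l uniform on {1..r}), else Random Sampling (uniform random subset As).\<close>
definition combined_expected_welfare ::
  "('a::finite set \<Rightarrow> ('a \<Rightarrow> 'b set \<Rightarrow> real) \<Rightarrow> ('a \<Rightarrow> 'b set))
   \<Rightarrow> ('a \<Rightarrow> 'b set \<Rightarrow> ('a \<Rightarrow> nat) \<Rightarrow> real) \<Rightarrow> nat \<Rightarrow> real \<Rightarrow> ('a \<Rightarrow> nat) \<Rightarrow> real" where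
  "combined_expected_welfare sel v r p s =
     p * ((\<Sum>l\<in>{1..r}. welfare v s (fst (random_bucket sel v l s))) / real r)
   + (1 - p) * ((\<Sum>As\<in>(UNIV :: 'a set set). welfare v s (fst (random_sampling sel v As s)))
                 / 2 ^ card (UNIV :: 'a set))"

end

theory Submission
  imports Defs
begin

lemma mono_gen:
  fixes f :: "('a::finite \<Rightarrow> nat) \<Rightarrow> real"
  assumes mono1: "\<And>s j x y. valid_profile k s \<Longrightarrow> x \<le> y \<Longrightarrow> y < k \<Longrightarrow> f (s(j:=x)) \<le> f (s(j:=y))"
    and vs: "valid_profile k s" and le: "\<forall>j. s' j \<le> s j"
  shows "f s' \<le> f s"
proof -
  have "\<forall>s'. (\<forall>j. s' j \<le> s j) \<longrightarrow> {j. s' j \<noteq> s j} \<subseteq> F \<longrightarrow> f s' \<le> f s" if "finite F" for F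
    using that
  proof (induction F rule: finite_induct)
    case empty
    then show ?case by (auto intro!: ext)
  next
    case (insert a F)
    show ?case
    proof (intro allI impI)
      fix s' :: "'a \<Rightarrow> nat"
      assume le': "\<forall>j. s' j \<le> s j" and sub: "{j. s' j \<noteq> s j} \<subseteq> insert a F"
      define s'' where "s'' = s'(a := s a)"
      have le'': "\<forall>j. s'' j \<le> s j" using le' by (simp add: s''_def)
      have "{j. s'' j \<noteq> s j} \<subseteq> F" using sub by (auto simp: s''_def)
      hence h1: "f s'' \<le> f s" using insert.IH le'' by blast
      have vs'': "valid_profile k s''" using vs le'' unfolding valid_profile_def
        by (meson le_less_trans)
      have "f (s''(a := s' a)) \<le> f (s''(a := s a))"
        using mono1[OF vs'', of "s' a" "s a" a] le' vs unfolding valid_profile_def by auto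
      moreover have "s''(a := s' a) = s'" by (auto simp: s''_def)
      moreover have "s''(a := s a) = s''" by (auto simp: s''_def)
      ultimately show "f s' \<le> f s" using h1 by simp
    qed
  qed
  from this[of UNIV] le show ?thesis by auto
qed

definition P :: "('a \<Rightarrow> nat) \<Rightarrow> 'a set \<Rightarrow> ('a \<Rightarrow> nat)" where
  "P s S = (\<lambda>j. if j \<in> S then s j else 0)"

lemma SA:
  fixes f :: "('a::finite \<Rightarrow> nat) \<Rightarrow> real"
  assumes sos: "strong_SOS k d f" and vs: "valid_profile k s"
    and "finite B" and "A \<inter> B = {}"
  shows "f (P s (A \<union> B)) - f (P s A) \<le> d * (f (P s B) - f (\<lambda>j. 0))"
  using assms(3,4)
proof (induction B rule: finite_induct)
  case empty
  then show ?case by (simp add: P_def)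
next
  case (insert b B)
  have bA: "b \<notin> A" and AB: "A \<inter> B = {}" using insert.prems by auto
  have IH: "f (P s (A \<union> B)) - f (P s A) \<le> d * (f (P s B) - f (\<lambda>j. 0))"
    using insert.IH AB by simp
  have kpos: "\<forall>j. 0 < k" using vs unfolding valid_profile_def by (meson le_less_trans zero_le)
  have vP: "valid_profile k (P s S)" for S using vs kpos by (auto simp: valid_profile_def P_def)
  have "d * (f ((P s B)(b := P s B b + s b)) - f (P s B))
        \<ge> f ((P s (A \<union> B))(b := P s (A \<union> B) b + s b)) - f (P s (A \<union> B))"
  proof (rule sos[unfolded strong_SOS_def, rule_format, where j=b and \<delta>="s b" and s="P s (A \<union> B)" and s'="P s B"], intro conjI)
    show "valid_profile k (P s (A \<union> B))" "valid_profile k (P s B)" by (rule vP)+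
    show "\<forall>i. P s B i \<le> P s (A \<union> B) i" by (auto simp: P_def)
    show "P s (A \<union> B) b + s b < k" using insert.hyps bA vs by (auto simp: P_def valid_profile_def)
  qed
  moreover have "(P s B)(b := P s B b + s b) = P s (insert b B)"
    using insert.hyps by (auto simp: P_def)
  moreover have "(P s (A \<union> B))(b := P s (A \<union> B) b + s b) = P s (A \<union> insert b B)"
    using insert.hyps bA by (auto simp: P_def)
  ultimately show ?case using IH by (simp add: algebra_simps)
qed


lemma RS_single:
  fixes g :: "('a::finite \<Rightarrow> nat) \<Rightarrow> real"
  assumes sos: "strong_SOS k d g" and nn: "\<And>s. valid_profile k s \<Longrightarrow> g s \<ge> 0"
    and d: "d \<ge> 1" and vs: "valid_profile k s"
  shows "(\<Sum>As\<in>UNIV. if i \<notin> As then g (P s As) else 0)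
         \<ge> 2 ^ card (UNIV::'a set) * g (s(i:=0)) / (2*(d+1))"
proof -
  define h where "h As = g (P s (As - {i}))" for As
  have kpos: "0 < k" using vs unfolding valid_profile_def by (meson le_less_trans zero_le)
  have g0: "g (\<lambda>j. 0) \<ge> 0" using nn kpos by (simp add: valid_profile_def)
  have dg0: "d * g (\<lambda>j. 0) \<ge> 0" using g0 d by simp
  have key: "2 * g (s(i:=0)) \<le> (d+1) * (h As + h (-As))" for As
  proof -
    define A where "A = As - {i}"
    define B where "B = -As - {i}"
    have AB: "A \<inter> B = {}" "B \<inter> A = {}" by (auto simp: A_def B_def)
    have 1: "g (P s (A \<union> B)) - g (P s A) \<le> d * (g (P s B) - g (\<lambda>j. 0))"
      using SA[OF sos vs _ AB(1)] by simp
    have 2: "g (P s (B \<union> A)) - g (P s B) \<le> d * (g (P s A) - g (\<lambda>j. 0))"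
      using SA[OF sos vs _ AB(2)] by simp
    have e1: "P s (A \<union> B) = s(i:=0)" "P s (B \<union> A) = s(i:=0)"
      by (auto simp: P_def A_def B_def)
    have hA: "h As = g (P s A)" and hB: "h (-As) = g (P s B)"
      by (auto simp: h_def A_def B_def)
    show ?thesis using 1 2 dg0 unfolding e1 hA hB by (simp add: algebra_simps)
  qed
  have sumcomp: "(\<Sum>As\<in>UNIV. h (-As)) = (\<Sum>As\<in>UNIV. h As)"
    by (rule sum.reindex_bij_witness[of _ uminus uminus]) auto
  have cardU: "card (UNIV :: 'a set set) = 2 ^ card (UNIV :: 'a set)"
    by (metis Pow_UNIV card_Pow finite)
  have "(\<Sum>As\<in>(UNIV::'a set set). 2 * g (s(i:=0))) \<le> (\<Sum>As\<in>UNIV. (d+1) * (h As + h (-As)))"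
    using key by (meson sum_mono)
  also have "\<dots> = (d+1) * (2 * (\<Sum>As\<in>UNIV. h As))"
    by (simp add: sum_distrib_left[symmetric] sum.distrib sumcomp)
  finally have big: "2 ^ card (UNIV::'a set) * (2 * g (s(i:=0))) \<le> (d+1) * (2 * (\<Sum>As\<in>UNIV. h As))"
    by (simp add: cardU)
  define tau where "tau A = (if i \<in> A then A - {i} else insert i A)" for A
  have htau1: "h (A - {i}) = h A" and htau2: "h (insert i A) = h A" for A
    by (simp_all add: h_def)
  have tog: "(\<Sum>A\<in>UNIV. if i \<notin> A then h A else 0) = (\<Sum>A\<in>UNIV. if i \<in> A then h A else 0)"
    by (rule sum.reindex_bij_witness[of _ tau tau]) (auto simp: tau_def htau1 htau2)
  have spl: "(\<Sum>A\<in>UNIV. if i \<notin> A then h A else 0) + (\<Sum>A\<in>UNIV. if i \<in> A then h A else 0)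
        = (\<Sum>A\<in>UNIV. h A)"
    by (subst sum.distrib[symmetric]) (rule sum.cong, auto)
  have eqP: "(\<Sum>As\<in>UNIV. if i \<notin> As then g (P s As) else 0) = (\<Sum>As\<in>UNIV. if i \<notin> As then h As else 0)"
  proof (rule sum.cong)
    fix As :: "'a set"
    have "i \<notin> As \<Longrightarrow> As - {i} = As" by auto
    then show "(if i \<notin> As then g (P s As) else 0) = (if i \<notin> As then h As else 0)"
      by (simp add: h_def)
  qed simp
  have half: "(\<Sum>As\<in>UNIV. if i \<notin> As then g (P s As) else 0) = (\<Sum>A\<in>UNIV. h A) / 2"
    using tog spl eqP by simp
  have "2 ^ card (UNIV::'a set) * g (s(i:=0)) \<le> (\<Sum>A\<in>UNIV. h A) / 2 * (2*(d+1))"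
    using big by (simp add: algebra_simps)
  then show ?thesis unfolding half using d by (simp add: pos_divide_le_eq)
qed

lemma bucket:
  fixes g :: "('a::finite \<Rightarrow> nat) \<Rightarrow> real"
  assumes sos: "strong_SOS k d g" and nn: "\<And>s. valid_profile k s \<Longrightarrow> g s \<ge> 0"
    and mono1: "\<And>s j x y. valid_profile k s \<Longrightarrow> x \<le> y \<Longrightarrow> y < k \<Longrightarrow> g (s(j:=x)) \<le> g (s(j:=y))"
    and d: "d \<ge> 1" and vs: "valid_profile k s"
    and ti: "t \<le> s i" and ti2: "s i < 2 * t"
  shows "g s - g (s(i:=0)) \<le> d * (d+1) * g (\<lambda>j. if t \<le> s j then t else s j)"
proof -
  define q where "q = (\<lambda>j. if t \<le> s j then t else s j)"
  define \<delta> where "\<delta> = s i - t"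
  have kpos: "0 < k" using vs unfolding valid_profile_def by (meson le_less_trans zero_le)
  have sik: "s i < k" using vs by (simp add: valid_profile_def)
  have vq: "valid_profile k q" using vs by (auto simp: valid_profile_def q_def intro: le_less_trans)
  have a: "d * (g ((s(i:=0))(i := (s(i:=0)) i + \<delta>)) - g (s(i:=0)))
        \<ge> g ((s(i:=t))(i := (s(i:=t)) i + \<delta>)) - g (s(i:=t))"
  proof (rule sos[unfolded strong_SOS_def, rule_format, where j=i and \<delta>=\<delta> and s="s(i:=t)" and s'="s(i:=0)"], intro conjI)
    show "valid_profile k (s(i:=t))" "valid_profile k (s(i:=0))"
      using vs ti sik kpos by (auto simp: valid_profile_def intro: le_less_trans)
    show "\<forall>j. (s(i:=0)) j \<le> (s(i:=t)) j" by auto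
    show "(s(i:=t)) i + \<delta> < k" using ti sik by (simp add: \<delta>_def)
  qed
  have e1: "(s(i:=t))(i := (s(i:=t)) i + \<delta>) = s" using ti by (auto simp: \<delta>_def)
  have a': "g s - g (s(i:=t)) \<le> d * (g (s(i:=\<delta>)) - g (s(i:=0)))"
    using a unfolding e1 by simp
  have b: "g (s(i:=\<delta>)) \<le> g (s(i:=t))"
    using mono1[OF vs, of \<delta> t i] ti ti2 sik by (simp add: \<delta>_def)
  have c: "d * (g ((q(i:=0))(i := (q(i:=0)) i + t)) - g (q(i:=0)))
        \<ge> g ((s(i:=0))(i := (s(i:=0)) i + t)) - g (s(i:=0))"
  proof (rule sos[unfolded strong_SOS_def, rule_format, where j=i and \<delta>=t and s="s(i:=0)" and s'="q(i:=0)"], intro conjI)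
    show "valid_profile k (q(i:=0))" "valid_profile k (s(i:=0))"
      using vs vq kpos by (auto simp: valid_profile_def)
    show "\<forall>j. (q(i:=0)) j \<le> (s(i:=0)) j" by (auto simp: q_def)
    show "(s(i:=0)) i + t < k" using ti sik by simp
  qed
  have e2: "(q(i:=0))(i := (q(i:=0)) i + t) = q" using ti by (auto simp: q_def)
  have c': "g (s(i:=t)) - g (s(i:=0)) \<le> d * (g q - g (q(i:=0)))"
    using c unfolding e2 by simp
  have q0: "g (q(i:=0)) \<ge> 0" using nn vq kpos by (auto simp: valid_profile_def)
  have D0: "g (s(i:=0)) \<le> g (s(i:=t))" using mono1[OF vs, of 0 t i] ti sik by simp
  have "d * (g (s(i:=\<delta>)) - g (s(i:=0))) \<le> d * (g (s(i:=t)) - g (s(i:=0)))"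
    using b d by (intro mult_left_mono) auto
  hence s1: "g s - g (s(i:=0)) \<le> (d+1) * (g (s(i:=t)) - g (s(i:=0)))"
    using a' by (simp add: algebra_simps)
  have "d * (g q - g (q(i:=0))) \<le> d * g q" using q0 d by (simp add: algebra_simps)
  hence "g (s(i:=t)) - g (s(i:=0)) \<le> d * g q" using c' by simp
  hence "(d+1) * (g (s(i:=t)) - g (s(i:=0))) \<le> (d+1) * (d * g q)"
    using d by (intro mult_left_mono) auto
  with s1 show ?thesis unfolding q_def by (simp add: algebra_simps)
qed

lemma bucket_exists:
  "1 \<le> (x::nat) \<Longrightarrow> x < 2 ^ r \<Longrightarrow> \<exists>l\<in>{1..r}. 2 ^ (l - 1) \<le> x \<and> x < 2 * 2 ^ (l - 1)"
proof (induction r)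
  case 0
  then show ?case by simp
next
  case (Suc r)
  show ?case
  proof (cases "x < 2 ^ r")
    case True
    then obtain l where "l \<in> {1..r}" "2 ^ (l - 1) \<le> x \<and> x < 2 * 2 ^ (l - 1)"
      using Suc by blast
    then show ?thesis by (intro bexI[of _ l]) auto
  next
    case False
    then show ?thesis using Suc.prems by (intro bexI[of _ "Suc r"]) auto
  qed
qed


lemma sel_max:
  assumes "is_welfare_max_rule sel" "feasible A" "\<forall>i. i \<notin> N \<longrightarrow> A i = {}"
  shows "(\<Sum>i\<in>UNIV. w i (A i)) \<le> (\<Sum>i\<in>UNIV. w i (sel N w i))"
proof -
  have "\<forall>A. feasible A \<and> (\<forall>i. i \<notin> N \<longrightarrow> A i = {}) \<longrightarrow>
              (\<Sum>i\<in>UNIV. w i (A i)) \<le> (\<Sum>i\<in>UNIV. w i (sel N w i))"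
    using assms(1) unfolding is_welfare_max_rule_def by (elim allE[of _ N] allE[of _ w] conjE)
  then show ?thesis using assms(2,3) by blast
qed

lemma sel_out:
  assumes "is_welfare_max_rule sel" "i \<notin> N"
  shows "sel N w i = {}"
proof -
  have "\<forall>i. i \<notin> N \<longrightarrow> sel N w i = {}"
    using assms(1) unfolding is_welfare_max_rule_def by (elim allE[of _ N] allE[of _ w] conjE)
  then show ?thesis using assms(2) by blast
qed

lemma vv_nonneg: assumes "valid_valuations k d v" "valid_profile k s" shows "v i T s \<ge> 0"
  using assms unfolding valid_valuations_def by auto
lemma vv_empty: assumes "valid_valuations k d v" shows "v i {} s = 0"
  using assms unfolding valid_valuations_def by auto
lemma vv_mono1: assumes "valid_valuations k d v" "valid_profile k s" "x \<le> y" "y < k"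
  shows "v i T (s(j:=x)) \<le> v i T (s(j:=y))"
  using assms unfolding valid_valuations_def by auto
lemma vv_sos: assumes "valid_valuations k d v" shows "strong_SOS k d (v i T)"
  using assms unfolding valid_valuations_def by auto

lemma RB_lb:
  fixes v :: "'a::finite \<Rightarrow> 'b::finite set \<Rightarrow> ('a \<Rightarrow> nat) \<Rightarrow> real"
  assumes vv: "valid_valuations k d v" and sm: "is_welfare_max_rule sel"
    and vs: "valid_profile k s" and fO: "feasible Opt"
  shows "welfare v s (fst (random_bucket sel v l s))
     \<ge> (\<Sum>i\<in>UNIV. if 2^(l-1) \<le> s i then v i (Opt i) (\<lambda>j. if 2^(l-1) \<le> s j then 2^(l-1) else s j) else 0)"
proof -
  define t :: nat where "t = 2^(l-1)"
  define NB where "NB = {i. t \<le> s i}"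
  define q where "q = (\<lambda>j. if j \<in> NB then t else s j)"
  define vbar where "vbar = (\<lambda>i T. if i \<in> NB then v i T q else 0)"
  have fstA: "fst (random_bucket sel v l s) = sel NB vbar"
    unfolding vbar_def q_def NB_def t_def random_bucket_def Let_def by simp
  define O' where "O' i = (if i \<in> NB then Opt i else {})" for i
  have fO': "feasible O'" using fO by (auto simp: feasible_def O'_def)
  have "(\<Sum>i\<in>UNIV. vbar i (O' i)) \<le> (\<Sum>i\<in>UNIV. vbar i (sel NB vbar i))"
  proof -
    have "\<forall>i. i \<notin> NB \<longrightarrow> O' i = {}" by (simp add: O'_def)
    then show ?thesis using sel_max[OF sm fO'] by blast
  qed
  moreover have "(\<Sum>i\<in>UNIV. vbar i (O' i)) = (\<Sum>i\<in>UNIV. if 2^(l-1) \<le> s i then v i (Opt i) (\<lambda>j. if 2^(l-1) \<le> s j then 2^(l-1) else s j) else 0)"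
    unfolding vbar_def O'_def q_def NB_def t_def by (rule sum.cong) auto
  moreover have "(\<Sum>i\<in>UNIV. vbar i (sel NB vbar i)) \<le> (\<Sum>i\<in>UNIV. v i (sel NB vbar i) s)"
  proof (rule sum_mono)
    fix i :: 'a
    note V1 = vv_nonneg[OF vv] and V3 = vv_mono1[OF vv]
    have "v i T q \<le> v i T s" for T
      by (rule mono_gen[where k=k and f="v i T", OF V3 vs]) (auto simp: q_def NB_def)
    then show "vbar i (sel NB vbar i) \<le> v i (sel NB vbar i) s"
      using V1[OF vs] by (simp add: vbar_def)
  qed
  ultimately show ?thesis unfolding welfare_def fstA by linarith
qed

lemma RS_lb:
  fixes v :: "'a::finite \<Rightarrow> 'b::finite set \<Rightarrow> ('a \<Rightarrow> nat) \<Rightarrow> real"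
  assumes vv: "valid_valuations k d v" and sm: "is_welfare_max_rule sel"
    and vs: "valid_profile k s" and fO: "feasible Opt"
  shows "welfare v s (fst (random_sampling sel v As s))
     \<ge> (\<Sum>i\<in>UNIV. if i \<notin> As then v i (Opt i) (P s As) else 0)"
proof -
  define vtil where "vtil = (\<lambda>i T. if i \<notin> As then v i T (P s As) else 0)"
  have fstA: "fst (random_sampling sel v As s) = sel (-As) vtil"
    unfolding vtil_def P_def random_sampling_def Let_def by simp
  define O' where "O' i = (if i \<notin> As then Opt i else {})" for i
  have fO': "feasible O'" using fO by (auto simp: feasible_def O'_def)
  have "(\<Sum>i\<in>UNIV. vtil i (O' i)) \<le> (\<Sum>i\<in>UNIV. vtil i (sel (-As) vtil i))"
  proof -
    have "\<forall>i. i \<notin> -As \<longrightarrow> O' i = {}" by (simp add: O'_def)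
    then show ?thesis using sel_max[OF sm fO'] by blast
  qed
  moreover have "(\<Sum>i\<in>UNIV. vtil i (O' i)) = (\<Sum>i\<in>UNIV. if i \<notin> As then v i (Opt i) (P s As) else 0)"
    by (rule sum.cong) (auto simp: vtil_def O'_def)
  moreover have "(\<Sum>i\<in>UNIV. vtil i (sel (-As) vtil i)) \<le> (\<Sum>i\<in>UNIV. v i (sel (-As) vtil i) s)"
  proof (rule sum_mono)
    fix i :: 'a
    note V1 = vv_nonneg[OF vv] and V3 = vv_mono1[OF vv]
    have "v i T (P s As) \<le> v i T s" for T
      by (rule mono_gen[where k=k and f="v i T", OF V3 vs]) (auto simp: P_def)
    then show "vtil i (sel (-As) vtil i) \<le> v i (sel (-As) vtil i) s"
      using V1[OF vs] by (simp add: vtil_def)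
  qed
  ultimately show ?thesis unfolding welfare_def fstA by linarith
qed


lemma RB_IC:
  fixes v :: "'a::finite \<Rightarrow> 'b::finite set \<Rightarrow> ('a \<Rightarrow> nat) \<Rightarrow> real"
  assumes vv: "valid_valuations k d v" and sm: "is_welfare_max_rule sel"
    and k: "k = 2 ^ r" and l: "l \<in> {1..r}"
  shows "expost_IC_IR k v (random_bucket sel v l)"
proof -
  define t :: nat where "t = 2^(l-1)"
  have t1: "1 \<le> t" by (simp add: t_def)
  have tk: "t \<le> k" unfolding t_def k using l by (intro power_increasing) auto
  define A where "A \<rho> = fst (random_bucket sel v l \<rho>)" for \<rho>
  have pay: "snd (random_bucket sel v l \<rho>) i = (if t \<le> \<rho> i then v i (A \<rho> i) (\<rho>(i := t-1)) else 0)" for \<rho> i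
    unfolding A_def random_bucket_def Let_def t_def by simp
  have Aout: "A \<rho> i = {}" if "\<not> t \<le> \<rho> i" for \<rho> i
  proof -
    have "i \<notin> {j. t \<le> \<rho> j}" using that by simp
    from sel_out[OF sm this] show ?thesis
      unfolding A_def random_bucket_def Let_def t_def by simp
  qed
  have Asame: "A \<rho> = A s" if "t \<le> \<rho> i" "t \<le> s i" "\<forall>j. j \<noteq> i \<longrightarrow> \<rho> j = s j" for \<rho> s i
  proof -
    have N: "{j. t \<le> \<rho> j} = {j. t \<le> s j}" using that by auto
    have Q: "(\<lambda>j. if j \<in> {j. t \<le> s j} then t else \<rho> j) = (\<lambda>j. if j \<in> {j. t \<le> s j} then t else s j)"
      using that by (intro ext) auto
    show ?thesis
      unfolding A_def random_bucket_def Let_def t_def[symmetric] N Q by (simp only: fst_conv)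
  qed
  show ?thesis unfolding expost_IC_IR_def
  proof (intro allI impI)
    fix s :: "'a \<Rightarrow> nat" and i :: 'a
    assume vs: "valid_profile k s"
    have sik: "s i < k" using vs by (simp add: valid_profile_def)
    define u where "u \<rho> = utility v (random_bucket sel v l) s i \<rho>" for \<rho>
    have U: "u \<rho> = (if t \<le> \<rho> i then v i (A \<rho> i) s - v i (A \<rho> i) (s(i:=t-1)) else 0)"
      if ag: "\<forall>j. j \<noteq> i \<longrightarrow> \<rho> j = s j" for \<rho>
    proof (cases "t \<le> \<rho> i")
      case True
      have "\<rho>(i := t-1) = s(i := t-1)" using ag by (intro ext) auto
      then show ?thesis using True unfolding u_def utility_def A_def[symmetric] pay by simp
    next
      case False
      then show ?thesis unfolding u_def utility_def A_def[symmetric] pay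
        by (simp add: Aout vv_empty[OF vv])
    qed
    have truth: "u s \<ge> 0"
    proof (cases "t \<le> s i")
      case True
      have "v i (A s i) (s(i:=t-1)) \<le> v i (A s i) (s(i:=s i))"
        using vv_mono1[OF vv vs, where x="t-1" and y="s i" and i=i and T="A s i" and j=i] True sik by simp
      then show ?thesis using U[of s] True by simp
    next
      case False
      then show ?thesis using U[of s] by simp
    qed
    have mis: "u (s(i:=x)) \<le> u s" if xk: "x < k" for x
    proof -
      have ag: "\<forall>j. j \<noteq> i \<longrightarrow> (s(i:=x)) j = s j" by simp
      show ?thesis
      proof (cases "t \<le> x")
        case tx: True
        show ?thesis
        proof (cases "t \<le> s i")
          case True
          have "A (s(i:=x)) = A s" by (rule Asame[where \<rho>="s(i:=x)" and s=s and i=i]) (use tx True in auto)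
          have Us: "u s = (if t \<le> s i then v i (A s i) s - v i (A s i) (s(i:=t-1)) else 0)"
            by (rule U) simp
          show ?thesis unfolding U[OF ag] Us \<open>A (s(i:=x)) = A s\<close> using tx True by simp
        next
          case False
          define B where "B = A (s(i:=x)) i"
          have "v i B (s(i:=s i)) \<le> v i B (s(i:=t-1))"
            using vv_mono1[OF vv vs, where x="s i" and y="t-1" and i=i and T=B and j=i] False tk t1 by simp
          then have "v i (A (s(i:=x)) i) (s(i:=s i)) \<le> v i (A (s(i:=x)) i) (s(i:=t-1))"
            unfolding B_def .
          then show ?thesis unfolding U[OF ag] using tx truth by simp
        qed
      next
        case False
        then show ?thesis unfolding U[OF ag] using truth by simp
      qed
    qed
    show "0 \<le> utility v (random_bucket sel v l) s i s \<and>
          (\<forall>x<k. utility v (random_bucket sel v l) s i (s(i := x)) \<le> utility v (random_bucket sel v l) s i s)"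
      using truth mis unfolding u_def by blast
  qed
qed

lemma RS_IC:
  fixes v :: "'a::finite \<Rightarrow> 'b::finite set \<Rightarrow> ('a \<Rightarrow> nat) \<Rightarrow> real"
  assumes vv: "valid_valuations k d v" and sm: "is_welfare_max_rule sel"
  shows "expost_IC_IR k v (random_sampling sel v As)"
  unfolding expost_IC_IR_def
proof (intro allI impI)
  fix s :: "'a \<Rightarrow> nat" and i :: 'a
  assume vs: "valid_profile k s"
  have same: "fst (random_sampling sel v As (s(i:=x))) i = fst (random_sampling sel v As s) i" for x
  proof (cases "i \<in> As")
    case True
    then have "i \<notin> -As" by simp
    then show ?thesis unfolding random_sampling_def Let_def by (simp add: sel_out[OF sm])
  next
    case False
    have "(\<lambda>j. if j \<in> As then (s(i:=x)) j else 0) = (\<lambda>j. if j \<in> As then s j else 0)"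
      using False by (intro ext) auto
    then show ?thesis unfolding random_sampling_def Let_def by (simp only: fst_conv)
  qed
  have snd0: "snd (random_sampling sel v As \<rho>) = (\<lambda>i. 0)" for \<rho>
    unfolding random_sampling_def Let_def by simp
  show "0 \<le> utility v (random_sampling sel v As) s i s \<and>
          (\<forall>x<k. utility v (random_sampling sel v As) s i (s(i := x)) \<le> utility v (random_sampling sel v As) s i s)"
    unfolding utility_def snd0 same using vv_nonneg[OF vv vs] by simp
qed


lemma approx:
  fixes v :: "'a::finite \<Rightarrow> 'b::finite set \<Rightarrow> ('a \<Rightarrow> nat) \<Rightarrow> real"
    and sel :: "'a set \<Rightarrow> ('a \<Rightarrow> 'b set \<Rightarrow> real) \<Rightarrow> ('a \<Rightarrow> 'b set)"
  assumes d: "d \<ge> 1" and k: "k = 2 ^ r" and r: "r \<ge> 1"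
    and vv: "valid_valuations k d v" and sm: "is_welfare_max_rule sel"
    and vs: "valid_profile k s"
  shows "opt_welfare v s \<le> (d * (d + 1) * real r + 2 * (d + 1))
              * combined_expected_welfare sel v r (d * real r / (d * real r + 2)) s"
proof -
  have fin: "finite (welfare v s ` {A. feasible A})" by simp
  have "feasible (\<lambda>_. {} :: 'b set)" by (simp add: feasible_def)
  hence ne: "welfare v s ` {A. feasible A} \<noteq> {}" by blast
  from Max_in[OF fin ne] obtain Opt where fO: "feasible Opt" and opt: "opt_welfare v s = welfare v s Opt"
    unfolding opt_welfare_def by auto
  define g where "g i = v i (Opt i)" for i
  have sos: "strong_SOS k d (g i)" for i unfolding g_def by (rule vv_sos[OF vv])
  have nn: "\<And>s. valid_profile k s \<Longrightarrow> g i s \<ge> 0" for i unfolding g_def by (rule vv_nonneg[OF vv])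
  have mono1: "\<And>s j x y. valid_profile k s \<Longrightarrow> x \<le> y \<Longrightarrow> y < k \<Longrightarrow> g i (s(j:=x)) \<le> g i (s(j:=y))" for i
    unfolding g_def by (rule vv_mono1[OF vv])
  define X where "X = (\<Sum>i\<in>UNIV. g i s - g i (s(i:=0)))"
  define Y where "Y = (\<Sum>i\<in>UNIV. g i (s(i:=0)))"
  have OPT: "opt_welfare v s = X + Y"
    by (simp add: opt welfare_def X_def Y_def g_def sum_subtractf)
  define SRB where "SRB = (\<Sum>l\<in>{1..r}. welfare v s (fst (random_bucket sel v l s)))"
  define SRS where "SRS = (\<Sum>As\<in>(UNIV::'a set set). welfare v s (fst (random_sampling sel v As s)))"
  define n where "n = card (UNIV::'a set)"
  define p where "p = d * real r / (d * real r + 2)"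
  have comb: "combined_expected_welfare sel v r p s = p*(SRB/real r) + (1-p)*(SRS/2^n)"
    by (simp add: combined_expected_welfare_def SRB_def SRS_def n_def)
  have dpos: "d > 0" using d by simp
  have kpos: "0 < k" using vs unfolding valid_profile_def by (meson le_less_trans zero_le)
  define c where "c l i = (if 2^(l-1) \<le> s i then g i (\<lambda>j. if 2^(l-1) \<le> s j then 2^(l-1) else s j) else 0)" for l i
  have c0: "c l i \<ge> 0" for l i
  proof -
    have "valid_profile k (\<lambda>j. if 2^(l-1) \<le> s j then 2^(l-1) else s j)"
      using vs by (auto simp: valid_profile_def intro: le_less_trans)
    then show ?thesis using nn by (simp add: c_def)
  qed
  have "SRB \<ge> (\<Sum>l\<in>{1..r}. \<Sum>i\<in>UNIV. c l i)"
    unfolding SRB_def c_def g_def by (rule sum_mono) (rule RB_lb[OF vv sm vs fO])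
  also have "(\<Sum>l\<in>{1..r}. \<Sum>i\<in>UNIV. c l i) = (\<Sum>i\<in>UNIV. \<Sum>l\<in>{1..r}. c l i)"
    by (rule sum.swap)
  finally have SRB1: "SRB \<ge> (\<Sum>i\<in>UNIV. \<Sum>l\<in>{1..r}. c l i)" .
  have ci: "(\<Sum>l\<in>{1..r}. c l i) \<ge> (g i s - g i (s(i:=0))) / (d*(d+1))" for i
  proof (cases "s i = 0")
    case True
    then have "s(i:=0) = s" by auto
    then show ?thesis using c0 by (simp add: sum_nonneg)
  next
    case False
    have "s i < 2^r" using vs k by (simp add: valid_profile_def)
    then obtain l0 where l0: "l0 \<in> {1..r}" "2^(l0-1) \<le> s i" "s i < 2 * 2^(l0-1)"
      using bucket_exists[of "s i" r] False by auto
    have "g i s - g i (s(i:=0)) \<le> d * (d+1) * g i (\<lambda>j. if 2^(l0-1) \<le> s j then 2^(l0-1) else s j)"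
      by (rule bucket[OF sos nn mono1 d vs l0(2) l0(3)])
    hence "(g i s - g i (s(i:=0))) / (d*(d+1)) \<le> c l0 i"
      using l0 dpos by (simp add: c_def pos_divide_le_eq mult.commute)
    also have "c l0 i \<le> (\<Sum>l\<in>{1..r}. c l i)"
      by (rule member_le_sum) (use l0 c0 in auto)
    finally show ?thesis .
  qed
  have SRB2: "SRB \<ge> X / (d*(d+1))"
  proof -
    have "X / (d*(d+1)) = (\<Sum>i\<in>UNIV. (g i s - g i (s(i:=0))) / (d*(d+1)))"
      unfolding X_def by (simp add: sum_divide_distrib)
    also have "\<dots> \<le> (\<Sum>i\<in>UNIV. \<Sum>l\<in>{1..r}. c l i)" by (rule sum_mono) (rule ci)
    finally show ?thesis using SRB1 by linarith
  qed
  have "(\<Sum>i\<in>UNIV. 2 ^ n * g i (s(i:=0)) / (2*(d+1)))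
     \<le> (\<Sum>i\<in>UNIV. \<Sum>As\<in>(UNIV::'a set set). if i \<notin> As then g i (P s As) else 0)"
    unfolding n_def by (rule sum_mono) (rule RS_single[OF sos nn d vs])
  also have "\<dots> = (\<Sum>As\<in>(UNIV::'a set set). \<Sum>i\<in>UNIV. if i \<notin> As then g i (P s As) else 0)"
    by (rule sum.swap)
  also have "\<dots> \<le> SRS"
    unfolding SRS_def g_def by (rule sum_mono) (rule RS_lb[OF vv sm vs fO])
  finally have SRS1: "SRS \<ge> (\<Sum>i\<in>UNIV. 2 ^ n * g i (s(i:=0)) / (2*(d+1)))" .
  have "(\<Sum>i\<in>UNIV. 2 ^ n * g i (s(i:=0)) / (2*(d+1))) = 2 ^ n * Y / (2*(d+1))"
    unfolding Y_def by (simp add: sum_divide_distrib sum_distrib_left)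
  with SRS1 have SRS2: "SRS \<ge> 2 ^ n * Y / (2*(d+1))" by simp
  define R where "R = real r"
  have Rpos: "R > 0" using r by (simp add: R_def)
  define D where "D = d * R + 2"
  have Dpos: "D > 0" using dpos Rpos by (simp add: D_def add_pos_pos)
  have p0: "p \<ge> 0" using dpos Rpos by (simp add: p_def R_def)
  have p1: "1 - p = 2 / D" using Dpos by (simp add: p_def D_def R_def field_simps)
  have t1: "p * (SRB / R) \<ge> X / (D*(d+1))"
  proof -
    have "SRB / R \<ge> X / (d*(d+1)) / R" by (rule divide_right_mono[OF SRB2]) (use Rpos in simp)
    hence "p * (SRB / R) \<ge> p * (X / (d*(d+1)) / R)" using p0 by (rule mult_left_mono)
    moreover have "p * (X / (d*(d+1)) / R) = X / (D*(d+1))"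
    proof -
      have pD: "p = d*R/D" by (simp add: p_def D_def R_def)
      have e: "D * (d*(d+1)) * R = (d*R) * (D*(d+1))" by (simp add: algebra_simps)
      have "d*R/D * (X/(d*(d+1))/R) = (d*R) * X / (D * (d*(d+1)) * R)" by simp
      also have "\<dots> = (d*R)*X / ((d*R)*(D*(d+1)))" by (simp only: e)
      also have "\<dots> = X/(D*(d+1))" using dpos Rpos
        by (subst nonzero_mult_divide_mult_cancel_left) auto
      finally show ?thesis unfolding pD .
    qed
    ultimately show ?thesis by simp
  qed
  have t2: "(1 - p) * (SRS / 2^n) \<ge> Y / (D*(d+1))"
  proof -
    have "SRS / 2^n \<ge> 2 ^ n * Y / (2*(d+1)) / 2^n" by (rule divide_right_mono[OF SRS2]) simp
    moreover have "2 ^ n * Y / (2*(d+1)) / 2^n = Y / (2*(d+1))" by simp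
    ultimately have "SRS / 2^n \<ge> Y / (2*(d+1))" by simp
    hence "(1-p) * (SRS / 2^n) \<ge> (2/D) * (Y / (2*(d+1)))" unfolding p1 using Dpos
      by (intro mult_left_mono) auto
    moreover have "(2/D) * (Y / (2*(d+1))) = Y / (D*(d+1))"
    proof -
      have "(2/D) * (Y / (2*(d+1))) = 2 * Y / (D * (2*(d+1)))" by simp
      also have "\<dots> = 2 * Y / (2 * (D*(d+1)))" by (simp only: mult.left_commute)
      also have "\<dots> = Y / (D*(d+1))" by (subst nonzero_mult_divide_mult_cancel_left) auto
      finally show ?thesis .
    qed
    ultimately show ?thesis by simp
  qed
  have C: "d * (d + 1) * real r + 2 * (d + 1) = D * (d+1)" by (simp add: D_def R_def algebra_simps)
  have gen: "\<And>E::real. E \<noteq> 0 \<Longrightarrow> X + Y = E * (X / E + Y / E)"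
    by (simp add: distrib_left)
  have "X + Y = D*(d+1) * (X / (D*(d+1)) + Y / (D*(d+1)))"
    using Dpos dpos by (intro gen) simp
  also have "\<dots> \<le> D*(d+1) * (p*(SRB/real r) + (1-p)*(SRS/2^n))"
    using t1 t2 Dpos dpos unfolding R_def by (intro mult_left_mono) auto
  finally have "X + Y \<le> D*(d+1) * combined_expected_welfare sel v r p s" unfolding comb .
  then show ?thesis unfolding OPT C p_def .
qed

theorem mainTheorem16:
  fixes v :: "'a::finite \<Rightarrow> 'b::finite set \<Rightarrow> ('a \<Rightarrow> nat) \<Rightarrow> real"
    and sel :: "'a set \<Rightarrow> ('a \<Rightarrow> 'b set \<Rightarrow> real) \<Rightarrow> ('a \<Rightarrow> 'b set)"
    and d :: real and k r :: nat
  assumes "d \<ge> 1"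
    and "k = 2 ^ r" and "r \<ge> 1"
    and "valid_valuations k d v"
    and "is_welfare_max_rule sel"
  shows "(\<forall>l\<in>{1..r}. expost_IC_IR k v (random_bucket sel v l))
       \<and> (\<forall>As. expost_IC_IR k v (random_sampling sel v As))
       \<and> (\<forall>s. valid_profile k s \<longrightarrow>
            opt_welfare v s \<le> (d * (d + 1) * real r + 2 * (d + 1))
              * combined_expected_welfare sel v r (d * real r / (d * real r + 2)) s)"
  using RB_IC[OF assms(4,5,2)] RS_IC[OF assms(4,5)] approx[OF assms] by blast

end
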